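(* Let $G=(V,E)$ be an infinite, connected, locally finite graph (no self-loops) and let $v\in V$. Then there exists a finite Borel measure $\mu$ on $[-1,1]$ such that for every integer $t\geq 2$, $$\mathbb{P}_v(\tau_v=t)=\int_{-1}^{1} x^{t-2}\,d\mu(x).$$
   Context: $(X_t)$ is simple random walk on $G$ with $X_0=v$ and $\tau_v=\min\{t\geq 1:X_t=v\}$. *)

theory Defs
  imports "HOL-Analysis.Analysis"
begin

text \<open>A (multi)graph on vertex type 'a is given by edge multiplicities
  E u w (number of edges between u and w).\<close>

definition nbrs :: "('a \<Rightarrow> 'a \<Rightarrow> nat) \<Rightarrow> 'a \<Rightarrow> 'a set" where
  "nbrs E u = {w. E u w > 0}"

definition deg :: "('a \<Rightarrow> 'a \<Rightarrow> nat) \<Rightarrow> 'a \<Rightarrow> nat" where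
  "deg E u = (\<Sum>w\<in>nbrs E u. E u w)"

definition infinite_connected_locally_finite_graph :: "('a \<Rightarrow> 'a \<Rightarrow> nat) \<Rightarrow> bool" where
  "infinite_connected_locally_finite_graph E \<longleftrightarrow>
     infinite (UNIV :: 'a set) \<and>
     (\<forall>u w. E u w = E w u) \<and>
     (\<forall>u. E u u = 0) \<and>
     (\<forall>u. finite (nbrs E u)) \<and>
     (\<forall>u w. (\<lambda>x y. E x y > 0)\<^sup>*\<^sup>* u w)"

definition srw_step :: "('a \<Rightarrow> 'a \<Rightarrow> nat) \<Rightarrow> 'a \<Rightarrow> 'a \<Rightarrow> real" where
  "srw_step E u w = real (E u w) / real (deg E u)"

text \<open>Paths x_0 = v, x_1, ..., x_t = v of length t along edges avoiding v at
  times 1..t-1, i.e. trajectories realising tau_v = t.\<close>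
definition first_return_paths :: "('a \<Rightarrow> 'a \<Rightarrow> nat) \<Rightarrow> 'a \<Rightarrow> nat \<Rightarrow> 'a list set" where
  "first_return_paths E v t = {p. length p = Suc t \<and> p ! 0 = v \<and> p ! t = v \<and>
      (\<forall>i\<in>{1..<t}. p ! i \<noteq> v) \<and> (\<forall>i<t. E (p ! i) (p ! Suc i) > 0)}"

text \<open>P_v(tau_v = t) for simple random walk started at v, where
  tau_v = min {t \<ge> 1. X_t = v}.\<close>
definition first_return_prob :: "('a \<Rightarrow> 'a \<Rightarrow> nat) \<Rightarrow> 'a \<Rightarrow> nat \<Rightarrow> real" where
  "first_return_prob E v t =
     (\<Sum>p\<in>first_return_paths E v t. \<Prod>i<t. srw_step E (p ! i) (p ! Suc i))"

end

theory Submission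
  imports Defs "HOL-Probability.Probability"
begin


lemma compact_Pi_UNIV:
  fixes T :: "'a \<Rightarrow> 'b::topological_space set"
  assumes "\<And>i. compact (T i)"
  shows "compact (Pi UNIV T)"
proof -
  have "compactin (product_topology (\<lambda>i. euclidean) UNIV) (PiE UNIV T)"
    using assms by (simp add: compactin_PiE)
  then show ?thesis by (simp add: euclidean_product_topology PiE_UNIV_domain)
qed

lemma continuous_on_coord [continuous_intros]:
  "continuous_on s (\<lambda>f. f i :: 'b::topological_space)"
  by (rule continuous_on_subset[OF continuous_on_product_coordinates]) simp

lemma quad_le0:
  fixes Y D :: real
  assumes "\<And>t. 2*t*Y + t^2*D \<le> 0" and "Y \<ge> 0"
  shows "Y = 0"
proof (rule ccontr)
  assume "Y \<noteq> 0"
  then have Y: "Y > 0" using assms(2) by simp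
  define t where "t = Y / (\<bar>D\<bar> + 1)"
  have t: "t > 0" using Y by (simp add: t_def)
  have "t * \<bar>D\<bar> \<le> Y" unfolding t_def using Y
    by (simp add: field_simps)
  then have "t^2 * \<bar>D\<bar> \<le> t * Y" using t by (simp add: power2_eq_square mult.assoc mult_left_mono)
  moreover have "t^2 * D \<ge> - (t^2 * \<bar>D\<bar>)" using mult_left_mono[of "-\<bar>D\<bar>" D "t^2"] by simp
  moreover have "t * Y > 0" using t Y by simp
  ultimately have "2*t*Y + t^2*D > 0" by linarith
  with assms(1)[of t] show False by simp
qed

locale spec =
  fixes S :: "'a set" and w :: "'a \<Rightarrow> real" and K :: "'a \<Rightarrow> 'a \<Rightarrow> real"
  assumes finS: "finite S" and wpos: "\<And>x. x \<in> S \<Longrightarrow> w x > 0"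
    and Ksym: "\<And>x y. x \<in> S \<Longrightarrow> y \<in> S \<Longrightarrow> w x * K x y = w y * K y x"
    and Knn: "\<And>x y. x \<in> S \<Longrightarrow> y \<in> S \<Longrightarrow> K x y \<ge> 0"
    and Ksum: "\<And>x. x \<in> S \<Longrightarrow> (\<Sum>y\<in>S. K x y) \<le> 1"
begin

definition ip :: "('a \<Rightarrow> real) \<Rightarrow> ('a \<Rightarrow> real) \<Rightarrow> real" where
  "ip f g = (\<Sum>x\<in>S. w x * f x * g x)"

definition A :: "('a \<Rightarrow> real) \<Rightarrow> 'a \<Rightarrow> real" where
  "A f = (\<lambda>x. if x \<in> S then (\<Sum>y\<in>S. K x y * f y) else 0)"

definition V :: "('a \<Rightarrow> real) set" where
  "V = {f. \<forall>x. x \<notin> S \<longrightarrow> f x = 0}"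

lemma ip_sym: "ip f g = ip g f"
  unfolding ip_def by (simp add: mult_ac)

lemma ip_lc_left: "ip (\<lambda>x. a * f x + g x) k = a * ip f k + ip g k"
  unfolding ip_def by (simp add: algebra_simps sum.distrib sum_distrib_left)

lemma ip_lc_right: "ip k (\<lambda>x. a * f x + g x) = a * ip k f + ip k g"
  using ip_lc_left ip_sym by metis

lemma ip_scale_left: "ip (\<lambda>x. a * f x) k = a * ip f k"
  unfolding ip_def by (simp add: algebra_simps sum_distrib_left)

lemma ip_scale_right: "ip k (\<lambda>x. a * f x) = a * ip k f"
  using ip_scale_left ip_sym by metis

lemma ip_zero_left [simp]: "ip (\<lambda>x. 0) k = 0"
  unfolding ip_def by simp

lemma term_nonneg: "x \<in> S \<Longrightarrow> 0 \<le> w x * f x * f x"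
proof -
  assume x: "x \<in> S"
  have "0 \<le> f x * f x" by simp
  then show ?thesis using wpos[OF x] by (simp add: mult.assoc)
qed

lemma ip_nonneg: "ip f f \<ge> 0"
  unfolding ip_def by (intro sum_nonneg term_nonneg)

lemma ip_term_le: "x \<in> S \<Longrightarrow> w x * f x * f x \<le> ip f f"
  unfolding ip_def
  by (rule member_le_sum) (auto simp: finS intro!: term_nonneg)

lemma ip_zero: assumes "f \<in> V" "ip f f = 0" shows "f = (\<lambda>x. 0)"
proof
  fix x show "f x = 0"
  proof (cases "x \<in> S")
    case True
    have "w x * f x * f x \<le> 0" using ip_term_le[OF True, of f] assms(2) by simp
    moreover have "w x > 0" using wpos True by simp
    ultimately have "f x * f x \<le> 0"
      by (metis mult.assoc mult_le_0_iff not_less)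
    then show ?thesis by (metis mult_le_0_iff order_antisym_conv zero_le_square)
  next
    case False then show ?thesis using assms(1) by (auto simp: V_def)
  qed
qed

lemma A_V: "A f \<in> V"
  unfolding A_def V_def by auto

lemma A_lc: "A (\<lambda>x. a * f x + g x) = (\<lambda>x. a * A f x + A g x)"
  unfolding A_def by (auto simp: algebra_simps sum.distrib sum_distrib_left)

lemma A_scale: "A (\<lambda>x. a * f x) = (\<lambda>x. a * A f x)"
  unfolding A_def by (auto simp: algebra_simps sum_distrib_left)

lemma A_zero: "A (\<lambda>x. 0) = (\<lambda>x. 0)"
  unfolding A_def by auto

lemma ip_A_expand: "ip f (A g) = (\<Sum>x\<in>S. \<Sum>y\<in>S. (w x * K x y) * f x * g y)"
  unfolding ip_def A_def
  by (auto simp: sum_distrib_left intro!: sum.cong simp: mult_ac)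

lemma A_sym: "ip f (A g) = ip (A f) g"
proof -
  have "ip (A f) g = ip g (A f)" by (rule ip_sym)
  also have "\<dots> = (\<Sum>x\<in>S. \<Sum>y\<in>S. (w x * K x y) * g x * f y)" by (rule ip_A_expand)
  also have "\<dots> = (\<Sum>y\<in>S. \<Sum>x\<in>S. (w x * K x y) * g x * f y)" by (rule sum.swap)
  also have "\<dots> = (\<Sum>y\<in>S. \<Sum>x\<in>S. (w y * K y x) * f y * g x)"
    by (intro sum.cong refl) (simp add: Ksym mult_ac)
  also have "\<dots> = ip f (A g)" by (simp add: ip_A_expand)
  finally show ?thesis ..
qed

lemma A_bd: "\<bar>ip f (A f)\<bar> \<le> ip f f"
proof -
  define Q where "Q x y = w x * K x y" for x y
  have Qnn: "x \<in> S \<Longrightarrow> y \<in> S \<Longrightarrow> Q x y \<ge> 0" for x y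
    unfolding Q_def using wpos Knn by (simp add: less_imp_le)
  have e: "ip f (A f) = (\<Sum>x\<in>S. \<Sum>y\<in>S. Q x y * f x * f y)"
    unfolding Q_def by (rule ip_A_expand)
  have s1: "(\<Sum>x\<in>S. \<Sum>y\<in>S. Q x y * (f x)^2) \<le> ip f f"
  proof -
    have "(\<Sum>x\<in>S. \<Sum>y\<in>S. Q x y * (f x)^2) = (\<Sum>x\<in>S. w x * (f x)^2 * (\<Sum>y\<in>S. K x y))"
      unfolding Q_def sum_distrib_left by (simp add: mult_ac)
    also have "\<dots> \<le> (\<Sum>x\<in>S. w x * (f x)^2 * 1)"
      by (intro sum_mono mult_left_mono Ksum) (auto intro!: mult_nonneg_nonneg less_imp_le[OF wpos])
    also have "\<dots> = ip f f" unfolding ip_def by (simp add: power2_eq_square mult_ac)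
    finally show ?thesis .
  qed
  have s2: "(\<Sum>x\<in>S. \<Sum>y\<in>S. Q x y * (f y)^2) = (\<Sum>x\<in>S. \<Sum>y\<in>S. Q x y * (f x)^2)"
  proof -
    have "(\<Sum>x\<in>S. \<Sum>y\<in>S. Q x y * (f y)^2) = (\<Sum>y\<in>S. \<Sum>x\<in>S. Q x y * (f y)^2)"
      by (rule sum.swap)
    also have "\<dots> = (\<Sum>y\<in>S. \<Sum>x\<in>S. Q y x * (f y)^2)"
      unfolding Q_def by (intro sum.cong refl) (simp add: Ksym)
    finally show ?thesis .
  qed
  have up: "(\<Sum>x\<in>S. \<Sum>y\<in>S. Q x y * f x * f y) \<le> (\<Sum>x\<in>S. \<Sum>y\<in>S. Q x y * ((f x)^2 + (f y)^2) / 2)"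
  proof (intro sum_mono)
    fix x y assume "x \<in> S" "y \<in> S"
    then have q: "Q x y \<ge> 0" by (rule Qnn)
    have "f x * f y \<le> ((f x)^2 + (f y)^2) / 2"
      using sum_squares_bound[of "f x" "f y"] by (simp add: power2_eq_square)
    from mult_left_mono[OF this q] show "Q x y * f x * f y \<le> Q x y * ((f x)^2 + (f y)^2) / 2"
      by (simp add: mult.assoc)
  qed
  have lo: "- (\<Sum>x\<in>S. \<Sum>y\<in>S. Q x y * ((f x)^2 + (f y)^2) / 2) \<le> (\<Sum>x\<in>S. \<Sum>y\<in>S. Q x y * f x * f y)"
  proof -
    have "(\<Sum>x\<in>S. \<Sum>y\<in>S. - (Q x y * ((f x)^2 + (f y)^2) / 2)) \<le> (\<Sum>x\<in>S. \<Sum>y\<in>S. Q x y * f x * f y)"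
    proof (intro sum_mono)
      fix x y assume "x \<in> S" "y \<in> S"
      then have q: "Q x y \<ge> 0" by (rule Qnn)
      have "- (((f x)^2 + (f y)^2) / 2) \<le> f x * f y"
        using sum_squares_bound[of "f x" "- f y"] by (simp add: power2_eq_square field_simps)
      from mult_left_mono[OF this q] show "- (Q x y * ((f x)^2 + (f y)^2) / 2) \<le> Q x y * f x * f y"
        by (simp add: mult.assoc)
    qed
    then show ?thesis by (simp add: sum_negf)
  qed
  have mid: "(\<Sum>x\<in>S. \<Sum>y\<in>S. Q x y * ((f x)^2 + (f y)^2) / 2) =
      ((\<Sum>x\<in>S. \<Sum>y\<in>S. Q x y * (f x)^2) + (\<Sum>x\<in>S. \<Sum>y\<in>S. Q x y * (f y)^2)) / 2"
    by (simp only: distrib_left add_divide_distrib sum.distrib sum_divide_distrib)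
  show ?thesis using e s1 s2 up lo mid by (simp add: abs_le_iff)
qed


definition onl :: "('a \<Rightarrow> real) list \<Rightarrow> bool" where
  "onl es \<longleftrightarrow> (\<forall>i<length es. \<forall>j<length es. ip (es!i) (es!j) = (if i = j then 1 else 0))"

lemma ip_sum_right: "ip f (\<lambda>x. \<Sum>i\<in>I. c i * u i x) = (\<Sum>i\<in>I. c i * ip f (u i))"
  unfolding ip_def sum_distrib_left by (subst sum.swap) (simp add: mult_ac)

lemma ip_sum_left: "ip (\<lambda>x. \<Sum>i\<in>I. c i * u i x) f = (\<Sum>i\<in>I. c i * ip (u i) f)"
  using ip_sum_right[where f=f and I=I and c=c and u=u] ip_sym by simp

lemma ip_diff_self: "ip (\<lambda>x. f x - g x) (\<lambda>x. f x - g x) = ip f f - 2 * ip f g + ip g g"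
proof -
  have eq: "(\<lambda>x. f x - g x) = (\<lambda>x. (-1) * g x + f x)" by auto
  show ?thesis unfolding eq ip_lc_left ip_lc_right using ip_sym[of f g] by simp
qed

lemma bessel:
  assumes "onl es"
  shows "(\<Sum>i<length es. (ip f (es!i))^2) \<le> ip f f"
proof -
  let ?n = "length es"
  define c where "c i = ip f (es!i)" for i
  define g where "g = (\<lambda>x. \<Sum>i<?n. c i * (es!i) x)"
  have fg: "ip f g = (\<Sum>i<?n. (c i)^2)"
    unfolding g_def ip_sum_right by (simp add: c_def power2_eq_square)
  have gg: "ip g g = (\<Sum>i<?n. (c i)^2)"
  proof -
    have "ip g g = (\<Sum>i<?n. c i * ip (es!i) g)" unfolding g_def ip_sum_left ..
    also have "\<dots> = (\<Sum>i<?n. c i * (\<Sum>j<?n. c j * ip (es!i) (es!j)))"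
      unfolding g_def ip_sum_right ..
    also have "\<dots> = (\<Sum>i<?n. c i * (\<Sum>j<?n. c j * (if i = j then 1 else 0)))"
      using assms unfolding onl_def by (intro sum.cong refl) auto
    also have "\<dots> = (\<Sum>i<?n. (c i)^2)"
      by (intro sum.cong refl) (simp add: if_distrib sum.delta power2_eq_square cong: if_cong)
    finally show ?thesis .
  qed
  have "0 \<le> ip (\<lambda>x. f x - g x) (\<lambda>x. f x - g x)" by (rule ip_nonneg)
  then show ?thesis unfolding ip_diff_self fg gg c_def by simp
qed

lemma card_bound:
  assumes "onl es"
  shows "length es \<le> card S"
proof -
  let ?n = "length es"
  define d :: "'a \<Rightarrow> 'a \<Rightarrow> real" where "d x = (\<lambda>y. if y = x then 1 else 0 :: real)" for x
  have ipd: "ip (d x) u = w x * u x" if x: "x \<in> S" for x u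
  proof -
    have "ip (d x) u = (\<Sum>y\<in>S. if y = x then w x * u x else 0)"
      unfolding ip_def d_def by (intro sum.cong) auto
    then show ?thesis using finS x by simp
  qed
  have each: "(\<Sum>i<?n. w x * ((es!i) x)^2) \<le> 1" if x: "x \<in> S" for x
  proof -
    have "(\<Sum>i<?n. (ip (d x) (es!i))^2) \<le> ip (d x) (d x)" by (rule bessel[OF assms])
    then have "(\<Sum>i<?n. (w x * (es!i) x)^2) \<le> w x"
      using ipd[OF x] by (simp add: d_def)
    then have "w x * (\<Sum>i<?n. w x * ((es!i) x)^2) \<le> w x * 1"
      by (simp add: sum_distrib_left power2_eq_square mult_ac)
    then show ?thesis using wpos[OF x] by (simp add: mult_le_cancel_left)
  qed
  have "real ?n = (\<Sum>i<?n. ip (es!i) (es!i))"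
    using assms unfolding onl_def by simp
  also have "\<dots> = (\<Sum>x\<in>S. \<Sum>i<?n. w x * ((es!i) x)^2)"
    unfolding ip_def by (subst sum.swap) (simp add: power2_eq_square mult_ac)
  also have "\<dots> \<le> (\<Sum>x\<in>S. 1)" by (intro sum_mono each)
  finally show ?thesis by simp
qed


definition eig :: "('a \<Rightarrow> real) \<Rightarrow> bool" where
  "eig e \<longleftrightarrow> (\<exists>l. A e = (\<lambda>x. l * e x))"

definition Wset :: "('a \<Rightarrow> real) list \<Rightarrow> ('a \<Rightarrow> real) set" where
  "Wset es = {f\<in>V. \<forall>e\<in>set es. ip e f = 0}"

definition good :: "('a \<Rightarrow> real) list \<Rightarrow> bool" where
  "good es \<longleftrightarrow> onl es \<and> (\<forall>e\<in>set es. e \<in> V \<and> eig e)"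

lemma Wset_lc: "f \<in> Wset es \<Longrightarrow> g \<in> Wset es \<Longrightarrow> (\<lambda>x. a * f x + g x) \<in> Wset es"
  unfolding Wset_def V_def by (auto simp: ip_lc_right)

lemma Wset_scale: "f \<in> Wset es \<Longrightarrow> (\<lambda>x. a * f x) \<in> Wset es"
  unfolding Wset_def V_def by (auto simp: ip_scale_right)

lemma Wset_A: assumes "good es" "f \<in> Wset es" shows "A f \<in> Wset es"
  unfolding Wset_def
proof (intro CollectI conjI ballI A_V)
  fix e assume e: "e \<in> set es"
  then obtain l where l: "A e = (\<lambda>x. l * e x)" using assms(1) by (auto simp: good_def eig_def)
  have "ip e (A f) = ip (A e) f" by (rule A_sym)
  also have "\<dots> = l * ip e f" unfolding l ip_scale_left ..
  also have "\<dots> = 0" using assms(2) e by (simp add: Wset_def)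
  finally show "ip e (A f) = 0" .
qed

lemma Wset_Apow: "good es \<Longrightarrow> f \<in> Wset es \<Longrightarrow> (A ^^ n) f \<in> Wset es"
  by (induction n) (auto intro: Wset_A)

lemma rho_expand:
  "ip (\<lambda>x. t * y x + e x) (A (\<lambda>x. t * y x + e x)) = t^2 * ip y (A y) + 2*t*ip y (A e) + ip e (A e)"
proof -
  have s: "ip e (A y) = ip y (A e)" using A_sym ip_sym by metis
  show ?thesis unfolding A_lc ip_lc_left ip_lc_right s
    by (simp add: algebra_simps power2_eq_square)
qed

lemma norm_expand:
  "ip (\<lambda>x. t * y x + e x) (\<lambda>x. t * y x + e x) = t^2 * ip y y + 2*t*ip y e + ip e e"
  unfolding ip_lc_left ip_lc_right using ip_sym[of e y]
  by (simp add: algebra_simps power2_eq_square)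

lemma continuous_ip: "continuous_on X (\<lambda>f. ip f f)" "continuous_on X (\<lambda>f. ip g f)"
  unfolding ip_def by (intro continuous_intros)+

lemma rho_eq: "ip f (A f) = (\<Sum>x\<in>S. \<Sum>y\<in>S. w x * K x y * f x * f y)"
  unfolding ip_A_expand ..

lemma continuous_rho: "continuous_on X (\<lambda>f. ip f (A f))"
  unfolding rho_eq by (intro continuous_intros)

lemma spectral:
  "good es \<Longrightarrow> h \<in> Wset es \<Longrightarrow> \<exists>cls. (\<forall>(c,l)\<in>set cls. 0 \<le> c \<and> -1 \<le> l \<and> l \<le> 1) \<and>
      (\<forall>n. ip h ((A^^n) h) = (\<Sum>(c,l)\<leftarrow>cls. c * l^n))"
proof (induction "card S - length es" arbitrary: es h rule: less_induct)
  case less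
  note good = less.prems(1) and hW = less.prems(2)
  show ?case
  proof (cases "ip h h = 0")
    case True
    then have "h = (\<lambda>x. 0)" using hW ip_zero by (auto simp: Wset_def)
    then show ?thesis by (intro exI[of _ "[]"]) auto
  next
    case False
    define q where "q = ip h h"
    have q: "q > 0" using False ip_nonneg[of h] by (simp add: q_def)
    define KK where "KK = {f\<in>Wset es. ip f f = 1}"
    define B where "B = 1 + (\<Sum>x\<in>S. 1 / w x)"
    define T where "T x = (if x \<in> S then {-B..B} else {0::real})" for x
    have "0 \<le> (\<Sum>x\<in>S. 1 / w x)" by (intro sum_nonneg) (simp add: less_imp_le wpos)
    then have B1: "1 \<le> B" unfolding B_def by linarith
    have cT: "compact (T x)" for x by (simp add: T_def)
    have KKbox: "KK \<subseteq> Pi UNIV T"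
    proof
      fix f assume f: "f \<in> KK"
      show "f \<in> Pi UNIV T"
      proof (rule Pi_I)
        fix x show "f x \<in> T x"
        proof (cases "x \<in> S")
          case False then show ?thesis using f by (auto simp: KK_def Wset_def V_def T_def)
        next
          case True
          have wx: "w x > 0" using wpos True by simp
          have "w x * f x * f x \<le> 1" using ip_term_le[OF True, of f] f by (simp add: KK_def)
          then have "(f x)^2 \<le> 1 / w x" using wx by (simp add: field_simps power2_eq_square)
          also have "1 / w x \<le> (\<Sum>x\<in>S. 1 / w x)"
            by (rule member_le_sum) (use True finS wpos in \<open>auto intro: less_imp_le\<close>)
          also have "\<dots> \<le> B" by (simp add: B_def)
          also have "B \<le> B^2" using B1 by (simp add: power2_eq_square)
          finally have "\<bar>f x\<bar> \<le> \<bar>B\<bar>" by (simp add: abs_le_square_iff)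
          then show ?thesis using True B1 by (simp add: T_def abs_le_iff)
        qed
      qed
    qed
    have KKeq: "KK = Pi UNIV T \<inter> ({f. ip f f = 1} \<inter> (\<Inter>e\<in>set es. {f. ip e f = 0}))"
      using KKbox by (auto simp: KK_def Wset_def V_def T_def Pi_iff split: if_splits)
    have cKK: "compact KK"
      unfolding KKeq
    proof (rule compact_Int_closed)
      show "compact (Pi UNIV T)" by (rule compact_Pi_UNIV[OF cT])
      show "closed ({f. ip f f = 1} \<inter> (\<Inter>e\<in>set es. {f. ip e f = 0}))"
        by (intro closed_Int closed_INT ballI closed_Collect_eq continuous_ip continuous_on_const)
    qed
    define h1 where "h1 = (\<lambda>x. (1 / sqrt q) * h x)"
    have "h1 \<in> Wset es" unfolding h1_def by (rule Wset_scale[OF hW])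
    moreover have "ip h1 h1 = 1" unfolding h1_def ip_scale_left ip_scale_right q_def[symmetric]
      using q by (simp add: field_simps real_sqrt_mult_self)
    ultimately have "h1 \<in> KK" by (simp add: KK_def)
    then have KKne: "KK \<noteq> {}" by auto
    obtain e where eK: "e \<in> KK" and emax: "\<And>f. f \<in> KK \<Longrightarrow> ip f (A f) \<le> ip e (A e)"
      using continuous_attains_sup[OF cKK KKne continuous_rho] by blast
    define l where "l = ip e (A e)"
    have eW: "e \<in> Wset es" and ee: "ip e e = 1" using eK by (auto simp: KK_def)
    have ray: "ip f (A f) \<le> l * ip f f" if f: "f \<in> Wset es" for f
    proof (cases "ip f f = 0")
      case True
      then have "f = (\<lambda>x. 0)" using f ip_zero by (auto simp: Wset_def)
      then show ?thesis using True by simp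
    next
      case False
      define r where "r = ip f f"
      have r: "r > 0" using False ip_nonneg[of f] by (simp add: r_def)
      define g where "g = (\<lambda>x. (1 / sqrt r) * f x)"
      have "g \<in> Wset es" unfolding g_def by (rule Wset_scale[OF f])
      moreover have "ip g g = 1" unfolding g_def ip_scale_left ip_scale_right r_def[symmetric]
        using r by (simp add: field_simps real_sqrt_mult_self)
      ultimately have "g \<in> KK" by (simp add: KK_def)
      then have "ip g (A g) \<le> l" using emax l_def by simp
      moreover have "ip g (A g) = ip f (A f) / r"
        unfolding g_def A_scale ip_scale_left ip_scale_right using r
        by (simp add: field_simps real_sqrt_mult_self)
      ultimately show ?thesis using r by (simp add: r_def[symmetric] field_simps)
    qed
    have AeW: "A e \<in> Wset es" by (rule Wset_A[OF good eW])
    define y where "y = (\<lambda>x. (-l) * e x + A e x)"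
    have yW: "y \<in> Wset es" unfolding y_def by (rule Wset_lc[OF eW AeW])
    have "ip y y = (-l) * ip y e + ip y (A e)"
      by (subst (2) y_def, rule ip_lc_right)
    then have yy: "ip y y = ip y (A e) - l * ip y e" by simp
    have "2*t*ip y y + t^2 * (ip y (A y) - l * ip y y) \<le> 0" for t
    proof -
      have "(\<lambda>x. t * y x + e x) \<in> Wset es" by (rule Wset_lc[OF yW eW])
      from ray[OF this] have
        "t^2 * ip y (A y) + 2*t*ip y (A e) + ip e (A e) \<le> l * (t^2 * ip y y + 2*t*ip y e + ip e e)"
        unfolding rho_expand norm_expand .
      then have H: "t^2 * ip y (A y) + 2*t*ip y (A e) \<le> t^2 * (l * ip y y) + 2*t*(l * ip y e)"
        using ee by (simp add: l_def[symmetric] algebra_simps)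
      have e1: "2*t*ip y y = 2*t*ip y (A e) - 2*t*(l*ip y e)" unfolding yy by (simp add: algebra_simps)
      have e2: "t^2 * (ip y (A y) - l * ip y y) = t^2 * ip y (A y) - t^2 * (l * ip y y)"
        by (simp add: algebra_simps)
      show ?thesis unfolding e2 using H e1 by linarith
    qed
    then have "ip y y = 0" by (intro quad_le0[where D="ip y (A y) - l * ip y y", OF _ ip_nonneg])
    then have y0: "y = (\<lambda>x. 0)" using yW ip_zero by (auto simp: Wset_def)
    have "A e x = l * e x" for x using fun_cong[OF y0, of x] by (simp add: y_def)
    then have Ae: "A e = (\<lambda>x. l * e x)" by auto
    have lbd: "\<bar>l\<bar> \<le> 1" using A_bd[of e] ee by (simp add: l_def)
    define es' where "es' = e # es"
    have onl': "onl es'"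
    proof -
      have o: "onl es" using good by (simp add: good_def)
      have oe: "\<And>i. i < length es \<Longrightarrow> ip (es!i) e = 0" using eW by (auto simp: Wset_def)
      have oe': "\<And>i. i < length es \<Longrightarrow> ip e (es!i) = 0" using oe ip_sym by metis
      show ?thesis unfolding onl_def es'_def
      proof (intro allI impI)
        fix i j assume i: "i < length (e#es)" and j: "j < length (e#es)"
        show "ip ((e#es)!i) ((e#es)!j) = (if i = j then 1 else 0)"
        proof (cases i)
          case 0 then show ?thesis using ee oe' j by (cases j) auto
        next
          case (Suc i') then show ?thesis using oe i j o unfolding onl_def by (cases j) auto
        qed
      qed
    qed
    have good': "good es'"
      using good onl' eW Ae by (auto simp: good_def es'_def Wset_def eig_def)
    have "length es' \<le> card S" by (rule card_bound[OF onl'])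
    then have lt: "card S - length es' < card S - length es" by (simp add: es'_def)
    define \<alpha> where "\<alpha> = ip e h"
    define h' where "h' = (\<lambda>x. (-\<alpha>) * e x + h x)"
    have h'W: "h' \<in> Wset es'"
    proof -
      have "h' \<in> Wset es" unfolding h'_def by (rule Wset_lc[OF eW hW])
      moreover have "ip e h' = 0" unfolding h'_def ip_lc_right ee \<alpha>_def by simp
      ultimately show ?thesis by (auto simp: Wset_def es'_def)
    qed
    obtain cls' where cls'1: "\<forall>(c,l)\<in>set cls'. 0 \<le> c \<and> -1 \<le> l \<and> l \<le> 1"
      and cls'2: "\<forall>n. ip h' ((A^^n) h') = (\<Sum>(c,l)\<leftarrow>cls'. c * l^n)"
      using less.hyps[OF lt good' h'W] by blast
    have hdec: "h = (\<lambda>x. \<alpha> * e x + h' x)" unfolding h'_def by auto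
    have pow: "(A^^n) h = (\<lambda>x. (\<alpha> * l^n) * e x + (A^^n) h' x)" for n
    proof (induction n)
      case 0 then show ?case using hdec by simp
    next
      case (Suc n)
      have "(A^^Suc n) h = A (\<lambda>x. (\<alpha> * l^n) * e x + (A^^n) h' x)" using Suc by simp
      also have "\<dots> = (\<lambda>x. (\<alpha> * l^n) * A e x + A ((A^^n) h') x)" by (rule A_lc)
      also have "\<dots> = (\<lambda>x. (\<alpha> * l^Suc n) * e x + (A^^Suc n) h' x)" unfolding Ae by (simp add: mult_ac)
      finally show ?case .
    qed
    have mom: "ip h ((A^^n) h) = \<alpha>^2 * l^n + ip h' ((A^^n) h')" for n
    proof -
      have g: "(A^^n) h' \<in> Wset es'" by (rule Wset_Apow[OF good' h'W])
      then have g0: "ip e ((A^^n) h') = 0" by (auto simp: Wset_def es'_def)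
      have h'e: "ip h' e = 0" using h'W ip_sym[of h' e] by (auto simp: Wset_def es'_def)
      show ?thesis
        apply (subst pow)
        apply (subst (1) hdec)
        unfolding ip_lc_left ip_lc_right using ee g0 h'e by (simp add: power2_eq_square)
    qed
    show ?thesis
      using cls'1 cls'2 lbd
      by (intro exI[of _ "(\<alpha>^2, l) # cls'"]) (auto simp: mom abs_le_iff)
  qed
qed

end


lemma sum_filter_list:
  fixes f :: "'a \<Rightarrow> real"
  assumes "finite A" "fst ` set xs \<subseteq> A"
  shows "(\<Sum>a\<in>A. sum_list (map snd (filter (\<lambda>z. fst z = a) xs)) * f a) = (\<Sum>(x,p)\<leftarrow>xs. p * f x)"
  using assms(2)
proof (induction xs)
  case Nil then show ?case by simp
next
  case (Cons xp xs)
  obtain x p where xp: "xp = (x,p)" by (cases xp)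
  have xA: "x \<in> A" using Cons.prems xp by auto
  have "(\<Sum>a\<in>A. sum_list (map snd (filter (\<lambda>z. fst z = a) (xp#xs))) * f a) =
        (\<Sum>a\<in>A. (if x = a then p * f a else 0) + sum_list (map snd (filter (\<lambda>z. fst z = a) xs)) * f a)"
    by (intro sum.cong refl) (auto simp: xp algebra_simps)
  also have "\<dots> = p * f x + (\<Sum>(x,p)\<leftarrow>xs. p * f x)"
    using Cons xA assms(1) by (simp add: sum.distrib)
  finally show ?case by (simp add: xp)
qed

lemma integral_pmf_of_list:
  fixes f :: "'a \<Rightarrow> real"
  assumes wf: "pmf_of_list_wf xs"
  shows "integral\<^sup>L (measure_pmf (pmf_of_list xs)) f = (\<Sum>(x,p)\<leftarrow>xs. p * f x)"
proof -
  have "integral\<^sup>L (measure_pmf (pmf_of_list xs)) f = (\<Sum>a\<in>fst ` set xs. pmf (pmf_of_list xs) a *\<^sub>R f a)"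
    by (rule integral_measure_pmf) (use set_pmf_of_list[OF wf] in auto)
  also have "\<dots> = (\<Sum>a\<in>fst ` set xs. sum_list (map snd (filter (\<lambda>z. fst z = a) xs)) * f a)"
    by (simp add: pmf_pmf_of_list[OF wf])
  also have "\<dots> = (\<Sum>(x,p)\<leftarrow>xs. p * f x)"
    by (rule sum_filter_list) auto
  finally show ?thesis .
qed

lemma sum_list_pairs_div:
  fixes d :: real and f :: "'b \<Rightarrow> real" and cls :: "(real \<times> 'b) list"
  shows "(\<Sum>(c,l)\<leftarrow>cls. c * f l) / d = (\<Sum>(x,p)\<leftarrow>map (\<lambda>(c,l). (l, c / d)) cls. p * f x)"
  by (induction cls) (auto simp: add_divide_distrib comp_def)

definition clamp :: "real \<Rightarrow> real" where "clamp x = max (-1) (min 1 x)"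

lemma isCont_clamp: "isCont clamp x"
  unfolding clamp_def by (intro continuous_intros)

lemma clamp_bd: "\<bar>clamp x\<bar> \<le> 1" unfolding clamp_def by auto

lemma clamp_id: "-1 \<le> x \<Longrightarrow> x \<le> 1 \<Longrightarrow> clamp x = x" unfolding clamp_def by auto


lemma clamp_meas [measurable]: "clamp \<in> borel_measurable borel"
  unfolding clamp_def by measurable

definition gout :: "real \<Rightarrow> real" where "gout x = min 1 (max 0 (\<bar>x\<bar> - 1))"

lemma gout_meas [measurable]: "gout \<in> borel_measurable borel"
  unfolding gout_def by measurable

lemma isCont_gout: "isCont gout x"
  unfolding gout_def by (intro continuous_intros)

lemma sum_list_cong_pairs:
  "(\<And>c l. (c,l) \<in> set xs \<Longrightarrow> f c l = g c l) \<Longrightarrow> (\<Sum>(c,l)\<leftarrow>xs. f c l) = (\<Sum>(c,l)\<leftarrow>xs. g c l)"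
  by (induction xs) auto

lemma sum_list_moment_bound:
  fixes xs :: "(real \<times> real) list"
  assumes "\<forall>(c,l)\<in>set xs. 0 \<le> c \<and> -1 \<le> l \<and> l \<le> 1"
  shows "\<bar>\<Sum>(c,l)\<leftarrow>xs. c * l^n\<bar> \<le> (\<Sum>(c,l)\<leftarrow>xs. c)"
  using assms
proof (induction xs)
  case Nil then show ?case by simp
next
  case (Cons cl xs)
  obtain c l where cl: "cl = (c,l)" by (cases cl)
  have c: "0 \<le> c" and l: "\<bar>l\<bar> \<le> 1" using Cons.prems cl by auto
  have "\<bar>c * l^n\<bar> \<le> c" using c l by (simp add: abs_mult power_abs power_le_one mult_left_le)
  then show ?case using Cons cl by (auto intro: order_trans[OF abs_triangle_ineq])
qed

lemma measure_from_moments: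
  fixes m :: "nat \<Rightarrow> real"
  assumes ex: "\<And>N. \<exists>cls. (\<forall>(c,l)\<in>set cls. 0 \<le> c \<and> -1 \<le> l \<and> l \<le> 1) \<and>
      (\<forall>n\<le>N. m n = (\<Sum>(c,l)\<leftarrow>cls. c * l^n))"
  shows "\<exists>\<mu> :: real measure. sets \<mu> = sets borel \<and> finite_measure \<mu> \<and>
           emeasure \<mu> (- {-1..1}) = 0 \<and> (\<forall>n. m n = (LINT x:{-1..1}|\<mu>. x ^ n))"
proof -
  have "\<forall>N. \<exists>cls. (\<forall>(c,l)\<in>set cls. 0 \<le> c \<and> -1 \<le> l \<and> l \<le> 1) \<and>
      (\<forall>n\<le>N. m n = (\<Sum>(c,l)\<leftarrow>cls. c * l^n))" using ex by blast
  from choice[OF this] obtain cl where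
    cl1: "\<And>N. \<forall>(c,l)\<in>set (cl N). 0 \<le> c \<and> -1 \<le> l \<and> l \<le> 1" and
    cl2: "\<And>N n. n \<le> N \<Longrightarrow> m n = (\<Sum>(c,l)\<leftarrow>cl N. c * l^n)"
    by blast
  define m0 where "m0 = m 0"
  have m0: "m0 = (\<Sum>(c,l)\<leftarrow>cl N. c)" for N using cl2[of 0 N] by (simp add: m0_def)
  have bnd: "\<bar>m n\<bar> \<le> m0" for n
    using sum_list_moment_bound[OF cl1[of n], of n] cl2[of n n] m0[of n] by simp
  show ?thesis
  proof (cases "m0 = 0")
    case True
    then have mz: "m n = 0" for n using bnd[of n] by simp
    show ?thesis
      by (intro exI[of _ "null_measure borel"]) (auto simp: mz set_lebesgue_integral_def intro!: finite_measureI)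
  next
    case False
    then have m0pos: "m0 > 0" using bnd[of 0] by simp
    define xs where "xs N = map (\<lambda>(c,l). (l, c / m0)) (cl N)" for N
    have xsum: "(\<Sum>(x,p)\<leftarrow>xs N. p * f x) = (\<Sum>(c,l)\<leftarrow>cl N. c * f l) / m0" for N and f :: "real \<Rightarrow> real"
      unfolding xs_def by (rule sum_list_pairs_div[symmetric])
    have wf: "pmf_of_list_wf (xs N)" for N
    proof (rule pmf_of_list_wfI)
      fix x assume "x \<in> set (map snd (xs N))"
      then show "0 \<le> x" using cl1[of N] m0pos by (auto simp: xs_def)
    next
      have "sum_list (map snd (xs N)) = (\<Sum>(x,p)\<leftarrow>xs N. p * 1)"
        by (induction "xs N") (auto simp: case_prod_beta)
      also have "\<dots> = (\<Sum>(c,l)\<leftarrow>cl N. c * 1) / m0" by (rule xsum)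
      also have "\<dots> = 1" using m0[of N] m0pos by simp
      finally show "sum_list (map snd (xs N)) = 1" .
    qed
    define \<nu> where "\<nu> N = distr (measure_pmf (pmf_of_list (xs N))) borel (\<lambda>x. x)" for N
    have rd: "real_distribution (\<nu> N)" for N
      unfolding \<nu>_def by (rule prob_space.real_distribution_distr[OF prob_space_measure_pmf]) simp
    have int: "integral\<^sup>L (\<nu> N) f = (\<Sum>(c,l)\<leftarrow>cl N. c * f l) / m0"
      if [measurable]: "f \<in> borel_measurable borel" for N f
      unfolding \<nu>_def by (simp add: integral_distr integral_pmf_of_list[OF wf] xsum)
    have tight: "tight \<nu>"
      unfolding tight_def
    proof (intro conjI allI rd impI)
      fix \<epsilon> :: real assume "\<epsilon> > 0"
      have "measure (\<nu> N) {-2<..1} = 1" for N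
      proof -
        interpret real_distribution "\<nu> N" by (rule rd)
        have "measure (\<nu> N) {-2<..1} = integral\<^sup>L (\<nu> N) (indicator {-2<..1})" by simp
        also have "\<dots> = (\<Sum>(c,l)\<leftarrow>cl N. c * indicator {-2<..1} l) / m0" by (rule int) simp
        also have "(\<Sum>(c,l)\<leftarrow>cl N. c * indicator {-2<..1} l) = (\<Sum>(c,l)\<leftarrow>cl N. c)"
          by (rule sum_list_cong_pairs) (use cl1[of N] in auto)
        finally show ?thesis using m0[of N] m0pos by simp
      qed
      then show "\<exists>a b. a < b \<and> (\<forall>n. 1 - \<epsilon> < measure (\<nu> n) {a<..b})"
        using \<open>\<epsilon> > 0\<close> by (intro exI[of _ "-2"] exI[of _ 1]) auto
    qed
    obtain r M where r: "strict_mono r" and rdM: "real_distribution M"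
      and wc: "weak_conv_m (\<nu> \<circ> id \<circ> r) M"
      using tight_imp_convergent_subsubsequence[OF tight, of id] by (auto simp: strict_mono_def)
    have rd': "real_distribution ((\<nu> \<circ> id \<circ> r) n)" for n using rd by simp
    have conv: "(\<lambda>n. integral\<^sup>L ((\<nu> \<circ> id \<circ> r) n) f) \<longlonglongrightarrow> integral\<^sup>L M f"
      if "\<And>x. isCont f x" "\<And>x. norm (f x) \<le> 1" for f :: "real \<Rightarrow> real"
      by (rule weak_conv_imp_integral_bdd_continuous_conv[OF rd' rdM wc that])
    have mom: "integral\<^sup>L M (\<lambda>x. clamp x ^ k) = m k / m0" for k
    proof -
      have ev: "\<forall>\<^sub>F n in sequentially. m k / m0 = integral\<^sup>L ((\<nu> \<circ> id \<circ> r) n) (\<lambda>x. clamp x ^ k)"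
      proof (rule eventually_sequentiallyI[of k])
        fix n assume "k \<le> n"
        then have kr: "k \<le> r n" using seq_suble[OF r, of n] by simp
        have "integral\<^sup>L ((\<nu> \<circ> id \<circ> r) n) (\<lambda>x. clamp x ^ k) = (\<Sum>(c,l)\<leftarrow>cl (r n). c * clamp l ^ k) / m0"
          by (simp add: int)
        also have "(\<Sum>(c,l)\<leftarrow>cl (r n). c * clamp l ^ k) = (\<Sum>(c,l)\<leftarrow>cl (r n). c * l ^ k)"
          by (rule sum_list_cong_pairs) (use cl1[of "r n"] in \<open>auto simp: clamp_id\<close>)
        also have "\<dots> = m k" using cl2[OF kr] by simp
        finally show "m k / m0 = integral\<^sup>L ((\<nu> \<circ> id \<circ> r) n) (\<lambda>x. clamp x ^ k)" by simp
      qed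
      have l1: "(\<lambda>n. integral\<^sup>L ((\<nu> \<circ> id \<circ> r) n) (\<lambda>x. clamp x ^ k)) \<longlonglongrightarrow> m k / m0"
        by (rule Lim_transform_eventually[OF tendsto_const ev])
      have l2: "(\<lambda>n. integral\<^sup>L ((\<nu> \<circ> id \<circ> r) n) (\<lambda>x. clamp x ^ k)) \<longlonglongrightarrow> integral\<^sup>L M (\<lambda>x. clamp x ^ k)"
      proof (rule conv)
        fix x show "isCont (\<lambda>x. clamp x ^ k) x" by (intro continuous_intros isCont_clamp)
        show "norm (clamp x ^ k) \<le> 1" using clamp_bd[of x] by (simp add: power_abs power_le_one)
      qed
      show ?thesis using LIMSEQ_unique[OF l2 l1] .
    qed
    have gz: "integral\<^sup>L M gout = 0"
    proof -
      have ev: "\<forall>\<^sub>F n in sequentially. 0 = integral\<^sup>L ((\<nu> \<circ> id \<circ> r) n) gout"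
      proof (rule always_eventually, rule allI)
        fix n
        have "integral\<^sup>L ((\<nu> \<circ> id \<circ> r) n) gout = (\<Sum>(c,l)\<leftarrow>cl (r n). c * gout l) / m0"
          by (simp add: int)
        also have "(\<Sum>(c,l)\<leftarrow>cl (r n). c * gout l) = (\<Sum>(c,l)\<leftarrow>cl (r n). 0)"
          by (rule sum_list_cong_pairs) (use cl1[of "r n"] in \<open>auto simp: gout_def\<close>)
        also have "(\<Sum>(c,l)\<leftarrow>cl (r n). (0::real)) = 0"
          by (induction "cl (r n)") auto
        finally show "0 = integral\<^sup>L ((\<nu> \<circ> id \<circ> r) n) gout" by simp
      qed
      have l1: "(\<lambda>n. integral\<^sup>L ((\<nu> \<circ> id \<circ> r) n) gout) \<longlonglongrightarrow> 0"
        by (rule Lim_transform_eventually[OF tendsto_const ev])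
      have l2: "(\<lambda>n. integral\<^sup>L ((\<nu> \<circ> id \<circ> r) n) gout) \<longlonglongrightarrow> integral\<^sup>L M gout"
        by (rule conv) (auto simp: isCont_gout gout_def)
      show ?thesis using LIMSEQ_unique[OF l2 l1] .
    qed
    interpret M: real_distribution M by (rule rdM)
    have spM: "space M = UNIV" using M.events_eq_borel sets_eq_imp_space_eq by fastforce
    have "integrable M gout"
      by (rule M.integrable_const_bound[where B=1]) (auto simp: gout_def)
    then have "AE x in M. gout x = 0"
      using gz integral_nonneg_eq_0_iff_AE[of M gout] by (auto simp: gout_def)
    then have AEin: "AE x in M. x \<in> {-1..1}"
      by (rule eventually_mono) (auto simp: gout_def)
    have null: "emeasure M (- {-1..1}) = 0"
    proof -
      have e1: "- {-1..1} \<in> sets M" by simp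
      have e2: "{x\<in>space M. \<not> x \<in> {-1..1::real}} = - {-1..1}" using spM by auto
      show ?thesis using AE_iff_measurable[OF e1 e2] AEin by simp
    qed
    define \<mu> where "\<mu> = density M (\<lambda>_. ennreal m0)"
    have s\<mu>: "sets \<mu> = sets borel" by (simp add: \<mu>_def)
    have "emeasure \<mu> (space \<mu>) = ennreal m0"
      unfolding \<mu>_def using M.emeasure_space_1 spM by (simp add: emeasure_density_const)
    then have fin: "finite_measure \<mu>" by (intro finite_measureI) simp
    have nul\<mu>: "emeasure \<mu> (- {-1..1}) = 0"
      unfolding \<mu>_def by (subst emeasure_density_const) (auto simp: null)
    have "m n = (LINT x:{-1..1}|\<mu>. x ^ n)" for n
    proof -
      have "(LINT x:{-1..1}|\<mu>. x ^ n) = integral\<^sup>L \<mu> (\<lambda>x. indicator {-1..1} x * x ^ n)"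
        by (simp add: set_lebesgue_integral_def)
      also have "\<dots> = integral\<^sup>L M (\<lambda>x. m0 * (indicator {-1..1} x * x ^ n))"
        unfolding \<mu>_def using m0pos by (subst integral_density) auto
      also have "\<dots> = m0 * integral\<^sup>L M (\<lambda>x. indicator {-1..1} x * x ^ n)" by simp
      also have "integral\<^sup>L M (\<lambda>x. indicator {-1..1} x * x ^ n) = integral\<^sup>L M (\<lambda>x. clamp x ^ n)"
      proof (rule integral_cong_AE)
        show "AE x in M. indicator {-1..1} x * x ^ n = clamp x ^ n"
          using AEin by (rule eventually_mono) (simp add: clamp_id)
      qed simp_all
      also have "\<dots> = m n / m0" by (rule mom)
      finally show ?thesis using m0pos by simp
    qed
    then show ?thesis using s\<mu> fin nul\<mu> by blast
  qed
qed



context fixes E :: "'a \<Rightarrow> 'a \<Rightarrow> nat" and v :: 'a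
begin

fun HH :: "nat \<Rightarrow> 'a \<Rightarrow> real" where
  "HH 0 x = (if x = v then 1 else 0)"
| "HH (Suc n) x = (if x = v then 0 else (\<Sum>y\<in>nbrs E x. srw_step E x y * HH n y))"

definition hp :: "nat \<Rightarrow> 'a \<Rightarrow> 'a list set" where
  "hp n x = {q. length q = Suc n \<and> q!0 = x \<and> q!n = v \<and> (\<forall>i<n. q!i \<noteq> v) \<and> (\<forall>i<n. E (q!i) (q!Suc i) > 0)}"

definition ext :: "nat \<Rightarrow> 'a \<Rightarrow> 'a list set" where
  "ext n x = {p. length p = Suc (Suc n) \<and> p!0 = x \<and> p!(Suc n) = v \<and> (\<forall>j<n. p!(Suc j) \<noteq> v) \<and> (\<forall>i<Suc n. E (p!i) (p!Suc i) > 0)}"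

definition wt :: "nat \<Rightarrow> 'a list \<Rightarrow> real" where
  "wt n q = (\<Prod>i<n. srw_step E (q!i) (q!Suc i))"

lemma ball_1_Suc: "(\<forall>i\<in>{1..<Suc n}. P i) \<longleftrightarrow> (\<forall>j<n. P (Suc j))"
  by (metis One_nat_def Suc_le_eq Suc_less_eq atLeastLessThan_iff less_Suc_eq_0_disj not_less0)

lemma Cons_ext: "x' # q \<in> ext n x \<longleftrightarrow> x' = x \<and> q!0 \<in> nbrs E x \<and> q \<in> hp n (q!0)"
  unfolding ext_def hp_def nbrs_def
  by (auto simp: All_less_Suc2)

lemma ext_eq: "ext n x = (Cons x) ` (\<Union>y\<in>nbrs E x. hp n y)"
proof (rule set_eqI)
  fix p show "p \<in> ext n x \<longleftrightarrow> p \<in> (Cons x) ` (\<Union>y\<in>nbrs E x. hp n y)"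
  proof (cases p)
    case Nil then show ?thesis by (auto simp: ext_def)
  next
    case (Cons a q)
    have "q \<in> hp n y \<Longrightarrow> q!0 = y" for y by (simp add: hp_def)
    then show ?thesis unfolding Cons Cons_ext by blast
  qed
qed

lemma hp_0: "hp 0 x = (if x = v then {[v]} else {})"
proof -
  have "length q = Suc 0 \<Longrightarrow> q = [q!0]" for q :: "'a list"
    by (cases q) auto
  then show ?thesis unfolding hp_def by auto
qed

lemma hp_Suc: "hp (Suc n) x = (if x = v then {} else ext n x)"
  unfolding hp_def ext_def
  by (auto simp: All_less_Suc2)

lemma sum_ext:
  assumes fin: "finite (nbrs E x)" and finh: "\<And>y. finite (hp n y)"
  shows "(\<Sum>p\<in>ext n x. wt (Suc n) p) = (\<Sum>y\<in>nbrs E x. srw_step E x y * (\<Sum>q\<in>hp n y. wt n q))"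
proof -
  have d: "\<And>q y. q \<in> hp n y \<Longrightarrow> q!0 = y" by (simp add: hp_def)
  have "(\<Sum>p\<in>ext n x. wt (Suc n) p) = (\<Sum>q\<in>(\<Union>y\<in>nbrs E x. hp n y). wt (Suc n) (x # q))"
    unfolding ext_eq by (subst sum.reindex) (auto simp: inj_on_def)
  also have "\<dots> = (\<Sum>y\<in>nbrs E x. (\<Sum>q\<in>hp n y. wt (Suc n) (x # q)))"
    by (rule sum.UNION_disjoint) (use fin finh in \<open>auto dest: d\<close>)
  also have "\<dots> = (\<Sum>y\<in>nbrs E x. srw_step E x y * (\<Sum>q\<in>hp n y. wt n q))"
    unfolding sum_distrib_left
    by (intro sum.cong refl) (simp only: wt_def prod.lessThan_Suc_shift, simp add: d)
  finally show ?thesis .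
qed

lemma HH_hp:
  assumes fin: "\<And>x. finite (nbrs E x)"
  shows "finite (hp n x) \<and> HH n x = (\<Sum>q\<in>hp n x. wt n q)"
proof (induction n arbitrary: x)
  case 0 then show ?case by (simp add: hp_0 wt_def)
next
  case (Suc n)
  have fe: "finite (ext n y)" for y
    unfolding ext_eq using Suc fin by auto
  show ?case
    using fe[of x] sum_ext[OF fin] Suc by (auto simp: hp_Suc)
qed

lemma first_return_eq:
  assumes fin: "\<And>x. finite (nbrs E x)"
  shows "first_return_prob E v (Suc n) = (\<Sum>y\<in>nbrs E v. srw_step E v y * HH n y)"
proof -
  have "first_return_paths E v (Suc n) = ext n v"
    unfolding first_return_paths_def ext_def ball_1_Suc by auto
  then show ?thesis
    unfolding first_return_prob_def
    using sum_ext[OF fin, where x=v and n=n] HH_hp[OF fin] by (simp add: wt_def)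
qed


fun BB :: "nat \<Rightarrow> 'a set" where
  "BB 0 = {v}"
| "BB (Suc r) = BB r \<union> (\<Union>x\<in>BB r. nbrs E x)"

definition SS :: "nat \<Rightarrow> 'a set" where
  "SS R = {x\<in>BB R. x \<noteq> v \<and> deg E x > 0}"

definition AA :: "'a set \<Rightarrow> ('a \<Rightarrow> real) \<Rightarrow> 'a \<Rightarrow> real" where
  "AA S f = (\<lambda>x. if x \<in> S then (\<Sum>y\<in>S. srw_step E x y * f y) else 0)"

definition hS :: "'a set \<Rightarrow> 'a \<Rightarrow> real" where
  "hS S = (\<lambda>x. if x \<in> S then srw_step E x v else 0)"

definition ipd :: "'a set \<Rightarrow> ('a \<Rightarrow> real) \<Rightarrow> ('a \<Rightarrow> real) \<Rightarrow> real" where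
  "ipd S f g = (\<Sum>x\<in>S. real (deg E x) * f x * g x)"

lemma BB_mono: "d \<le> R \<Longrightarrow> BB d \<subseteq> BB R"
  by (induction R) (auto simp: le_Suc_eq)

lemma BB_nbrs: "y \<in> BB d \<Longrightarrow> nbrs E y \<subseteq> BB (Suc d)"
  by auto

lemma finite_BB: "(\<And>x. finite (nbrs E x)) \<Longrightarrow> finite (BB r)"
  by (induction r) auto

lemma not_nbr_step: "y \<notin> nbrs E x \<Longrightarrow> srw_step E x y = 0"
  by (simp add: nbrs_def srw_step_def)

lemma deg_ge: "finite (nbrs E x) \<Longrightarrow> y \<in> nbrs E x \<Longrightarrow> E x y \<le> deg E x"
  unfolding deg_def by (rule member_le_sum) auto

lemma deg_pos_nbr: "finite (nbrs E x) \<Longrightarrow> y \<in> nbrs E x \<Longrightarrow> deg E x > 0"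
  using deg_ge[of x y] by (auto simp: nbrs_def)

lemma deg0_nbrs: "finite (nbrs E x) \<Longrightarrow> deg E x = 0 \<Longrightarrow> nbrs E x = {}"
  using deg_pos_nbr by fastforce

lemma trunc:
  assumes fin: "\<And>x. finite (nbrs E x)" and sym: "\<And>x y. E x y = E y x"
  shows "y \<in> BB d \<Longrightarrow> d + n + 1 \<le> R \<Longrightarrow> HH (Suc n) y = (AA (SS R) ^^ n) (hS (SS R)) y"
proof (induction n arbitrary: y d)
  case 0
  have yR: "y \<in> BB R" using BB_mono[of d R] 0 by auto
  have "(\<Sum>z\<in>nbrs E y. srw_step E y z * (if z = v then 1 else 0)) = srw_step E y v"
    using fin[of y] not_nbr_step[of v y] by (simp add: sum.delta' if_distrib cong: if_cong)
  then show ?case using yR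
    by (auto simp: hS_def SS_def srw_step_def)
next
  case (Suc n)
  let ?S = "SS R"
  let ?g = "(AA ?S ^^ n) (hS ?S)"
  have yR: "y \<in> BB R" using BB_mono[of d R] Suc by auto
  show ?case
  proof (cases "y \<in> ?S")
    case False
    then have "y = v \<or> deg E y = 0" using yR by (auto simp: SS_def)
    then show ?thesis using False deg0_nbrs[OF fin, of y] by (auto simp: AA_def)
  next
    case True
    then have yv: "y \<noteq> v" by (auto simp: SS_def)
    have sub: "nbrs E y - {v} \<subseteq> ?S"
    proof
      fix z assume z: "z \<in> nbrs E y - {v}"
      then have "z \<in> BB (Suc d)" using BB_nbrs Suc.prems by blast
      then have "z \<in> BB R" using BB_mono[of "Suc d" R] Suc.prems by auto
      moreover have "y \<in> nbrs E z" using z sym by (auto simp: nbrs_def)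
      then have "deg E z > 0" using deg_pos_nbr[OF fin] by blast
      ultimately show "z \<in> ?S" using z by (auto simp: SS_def)
    qed
    have "HH (Suc (Suc n)) y = (\<Sum>z\<in>nbrs E y. srw_step E y z * HH (Suc n) z)"
      using yv by simp
    also have "\<dots> = (\<Sum>z\<in>nbrs E y - {v}. srw_step E y z * HH (Suc n) z)"
      by (rule sum.mono_neutral_right) (use fin in auto)
    also have "\<dots> = (\<Sum>z\<in>nbrs E y - {v}. srw_step E y z * ?g z)"
    proof (rule sum.cong[OF refl])
      fix z assume z: "z \<in> nbrs E y - {v}"
      then have "z \<in> BB (Suc d)" using BB_nbrs Suc.prems by blast
      then show "srw_step E y z * HH (Suc n) z = srw_step E y z * ?g z"
        using Suc.IH[of z "Suc d"] Suc.prems by simp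
    qed
    also have "\<dots> = (\<Sum>z\<in>?S. srw_step E y z * ?g z)"
      by (rule sum.mono_neutral_left)
         (use sub finite_subset[OF _ finite_BB[OF fin], of ?S R] in \<open>auto simp: SS_def not_nbr_step\<close>)
    also have "\<dots> = (AA ?S ^^ Suc n) (hS ?S) y"
      using True by (simp add: AA_def)
    finally show ?thesis .
  qed
qed

lemma fr_ipd:
  assumes fin: "\<And>x. finite (nbrs E x)" and sym: "\<And>x y. E x y = E y x" and loop: "E v v = 0"
    and R: "n + 2 \<le> R"
  shows "first_return_prob E v (Suc (Suc n)) = ipd (SS R) (hS (SS R)) ((AA (SS R) ^^ n) (hS (SS R))) / real (deg E v)"
proof -
  let ?S = "SS R"
  let ?g = "(AA ?S ^^ n) (hS ?S)"
  have finS: "finite ?S" using finite_subset[OF _ finite_BB[OF fin], of ?S R] by (auto simp: SS_def)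
  have sub: "nbrs E v \<subseteq> ?S"
  proof
    fix y assume y: "y \<in> nbrs E v"
    have "y \<in> BB 1" using y by simp
    then have "y \<in> BB R" using BB_mono[of 1 R] R by auto
    moreover have "y \<noteq> v" using y loop by (auto simp: nbrs_def)
    moreover have "v \<in> nbrs E y" using y sym by (auto simp: nbrs_def)
    then have "deg E y > 0" using deg_pos_nbr[OF fin] by blast
    ultimately show "y \<in> ?S" using y loop by (auto simp: SS_def nbrs_def)
  qed
  have "first_return_prob E v (Suc (Suc n)) = (\<Sum>y\<in>nbrs E v. srw_step E v y * HH (Suc n) y)"
    by (rule first_return_eq[OF fin])
  also have "\<dots> = (\<Sum>y\<in>nbrs E v. srw_step E v y * ?g y)"
  proof (rule sum.cong[OF refl])
    fix y assume "y \<in> nbrs E v"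
    then have "y \<in> BB 1" by simp
    then show "srw_step E v y * HH (Suc n) y = srw_step E v y * ?g y"
      using trunc[OF fin sym, of y 1 n R] R by simp
  qed
  also have "\<dots> = (\<Sum>y\<in>?S. srw_step E v y * ?g y)"
    by (rule sum.mono_neutral_left) (use sub finS in \<open>auto simp: not_nbr_step\<close>)
  also have "\<dots> = (\<Sum>y\<in>?S. real (deg E y) * hS ?S y * ?g y / real (deg E v))"
  proof (rule sum.cong[OF refl])
    fix y assume y: "y \<in> ?S"
    then have "deg E y > 0" by (auto simp: SS_def)
    then show "srw_step E v y * ?g y = real (deg E y) * hS ?S y * ?g y / real (deg E v)"
      using y sym[of v y] by (simp add: hS_def srw_step_def)
  qed
  also have "\<dots> = ipd ?S (hS ?S) ?g / real (deg E v)"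
    unfolding ipd_def sum_divide_distrib ..
  finally show ?thesis .
qed


lemma sum_list_div2:
  fixes d :: real and cls :: "(real \<times> real) list"
  shows "(\<Sum>(c,l)\<leftarrow>cls. c * l^n) / d = (\<Sum>(c,l)\<leftarrow>map (\<lambda>(c,l). (c / d, l)) cls. c * l^n)"
  by (induction cls) (auto simp: add_divide_distrib comp_def)

lemma graph_moments:
  assumes fin: "\<And>x. finite (nbrs E x)" and sym: "\<And>x y. E x y = E y x" and loop: "E v v = 0"
  shows "\<exists>cls. (\<forall>(c,l)\<in>set cls. 0 \<le> c \<and> -1 \<le> l \<and> l \<le> 1) \<and>
     (\<forall>n\<le>N. first_return_prob E v (Suc (Suc n)) = (\<Sum>(c,l)\<leftarrow>cls. c * l^n))"
proof -
  let ?R = "N + 2"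
  let ?S = "SS ?R"
  have finS: "finite ?S" using finite_subset[OF _ finite_BB[OF fin], of ?S ?R] by (auto simp: SS_def)
  have Ksum: "(\<Sum>y\<in>?S. srw_step E x y) \<le> 1" if x: "x \<in> ?S" for x
  proof -
    have dpos: "deg E x > 0" using x by (auto simp: SS_def)
    have "(\<Sum>y\<in>?S. E x y) = (\<Sum>y\<in>?S \<inter> nbrs E x. E x y)"
      by (rule sum.mono_neutral_right) (use finS in \<open>auto simp: nbrs_def\<close>)
    also have "\<dots> \<le> (\<Sum>y\<in>nbrs E x. E x y)"
      by (rule sum_mono2) (use fin in auto)
    finally have le: "(\<Sum>y\<in>?S. E x y) \<le> deg E x" by (simp add: deg_def)
    have le': "(\<Sum>y\<in>?S. real (E x y)) \<le> real (deg E x)"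
      using le by (metis of_nat_le_iff of_nat_sum)
    have "(\<Sum>y\<in>?S. srw_step E x y) = (\<Sum>y\<in>?S. real (E x y)) / real (deg E x)"
      by (simp add: srw_step_def sum_divide_distrib)
    also have "\<dots> \<le> 1" using le' dpos by simp
    finally show ?thesis .
  qed
  interpret sp: spec ?S "\<lambda>x. real (deg E x)" "srw_step E"
  proof
    show "finite ?S" by (rule finS)
  next
    fix x assume "x \<in> ?S" then show "0 < real (deg E x)" by (auto simp: SS_def)
  next
    fix x y assume "x \<in> ?S" "y \<in> ?S"
    then show "real (deg E x) * srw_step E x y = real (deg E y) * srw_step E y x"
      by (auto simp: SS_def srw_step_def sym[of x y])
  next
    fix x y show "0 \<le> srw_step E x y" by (simp add: srw_step_def)
  next
    fix x assume "x \<in> ?S" then show "(\<Sum>y\<in>?S. srw_step E x y) \<le> 1" by (rule Ksum)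
  qed
  have A_eq: "sp.A = AA ?S" unfolding sp.A_def AA_def by simp
  have ip_eq: "sp.ip = ipd ?S" unfolding sp.ip_def ipd_def by simp
  have hV: "hS ?S \<in> sp.Wset []" unfolding sp.Wset_def sp.V_def hS_def by auto
  have g0: "sp.good []" unfolding sp.good_def sp.onl_def by simp
  obtain cls where c1: "\<forall>(c,l)\<in>set cls. 0 \<le> c \<and> -1 \<le> l \<and> l \<le> 1"
    and c2: "\<forall>n. sp.ip (hS ?S) ((sp.A^^n) (hS ?S)) = (\<Sum>(c,l)\<leftarrow>cls. c * l^n)"
    using sp.spectral[OF g0 hV] by blast
  show ?thesis
  proof (intro exI[of _ "map (\<lambda>(c,l). (c / real (deg E v), l)) cls"] conjI allI impI)
    show "\<forall>(c,l)\<in>set (map (\<lambda>(c,l). (c / real (deg E v), l)) cls). 0 \<le> c \<and> -1 \<le> l \<and> l \<le> 1"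
      using c1 by auto
  next
    fix n assume "n \<le> N"
    then have "first_return_prob E v (Suc (Suc n)) = ipd ?S (hS ?S) ((AA ?S ^^ n) (hS ?S)) / real (deg E v)"
      by (intro fr_ipd[OF fin sym loop]) simp
    also have "\<dots> = (\<Sum>(c,l)\<leftarrow>cls. c * l^n) / real (deg E v)"
      using c2 unfolding A_eq ip_eq by simp
    also have "\<dots> = (\<Sum>(c,l)\<leftarrow>map (\<lambda>(c,l). (c / real (deg E v), l)) cls. c * l^n)"
      by (rule sum_list_div2)
    finally show "first_return_prob E v (Suc (Suc n)) = (\<Sum>(c,l)\<leftarrow>map (\<lambda>(c,l). (c / real (deg E v), l)) cls. c * l^n)" .
  qed
qed

end

theorem lemma2p2:
  fixes E :: "'a \<Rightarrow> 'a \<Rightarrow> nat" and v :: 'a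
  assumes "infinite_connected_locally_finite_graph E"
  shows "\<exists>\<mu> :: real measure. sets \<mu> = sets borel \<and> finite_measure \<mu> \<and>
           emeasure \<mu> (- {-1..1}) = 0 \<and>
           (\<forall>t::nat. t \<ge> 2 \<longrightarrow>
              first_return_prob E v t = (LINT x:{-1..1}|\<mu>. x ^ (t - 2)))"
proof -
  have fin: "\<And>x. finite (nbrs E x)" and sym: "\<And>x y. E x y = E y x" and loop: "E v v = 0"
    using assms unfolding infinite_connected_locally_finite_graph_def by auto
  define m where "m n = first_return_prob E v (Suc (Suc n))" for n
  have "\<exists>cls. (\<forall>(c,l)\<in>set cls. 0 \<le> c \<and> -1 \<le> l \<and> l \<le> 1) \<and>
      (\<forall>n\<le>N. m n = (\<Sum>(c,l)\<leftarrow>cls. c * l^n))" for N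
    unfolding m_def by (rule graph_moments[OF fin sym loop])
  from measure_from_moments[OF this] obtain \<mu> :: "real measure" where
    mu: "sets \<mu> = sets borel" "finite_measure \<mu>" "emeasure \<mu> (- {-1..1}) = 0"
      "\<And>n. m n = (LINT x:{-1..1}|\<mu>. x ^ n)" by blast
  have "first_return_prob E v t = (LINT x:{-1..1}|\<mu>. x ^ (t - 2))" if t: "t \<ge> 2" for t
  proof -
    have "t = Suc (Suc (t - 2))" using t by simp
    then have "first_return_prob E v t = m (t - 2)" unfolding m_def by metis
    then show ?thesis using mu(4) by simp
  qed
  then show ?thesis using mu by blast
qed

end
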